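(* Let $q$ be odd with characteristic $p$, and let $n\ge 2$. The number $K(n,q)$ of vectors $x \in \mathbb{F}_q^n$ with $(x,x) = 0$ and $(x,\mathbf{1}) \neq 0$ is \[ K(n,q) = \begin{cases} q^{n-2}(q-1), & p \mid n,\\ q^{n-2}(q-1) - \chi((-1)^{(n-1)/2}n)(q-1)q^{(n-3)/2}, & p\nmid n,\ n\text{ odd},\\ q^{n-2}(q-1) + \chi((-1)^{n/2})(q-1)q^{(n-2)/2}, & p\nmid n,\ n \text{ even}.\end{cases} \]
   Context: $(x,y) = \sum_i x_iy_i$ is the standard inner product, $\mathbf{1}$ the all-ones vector, and $\chi$ the quadratic character of $\mathbb{F}_q$ ($\chi(a)=1$ for nonzero squares, $-1$ for nonsquares, $\chi(0)=0$); $n$ is viewed as an element of $\mathbb{F}_q$ inside $\chi$. *)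

theory Defs
  imports Main
begin

definition qchar :: "'a::field \<Rightarrow> int" where
  "qchar a = (if a = 0 then 0 else if (\<exists>b. b * b = a) then 1 else -1)"

definition ip :: "'a::comm_ring list \<Rightarrow> 'a list \<Rightarrow> 'a" where
  "ip xs ys = sum_list (map2 (*) xs ys)"

definition K :: "nat \<Rightarrow> 'a::{finite,field} itself \<Rightarrow> nat" where
  "K n _ = card {xs :: 'a list. length xs = n \<and> ip xs xs = 0 \<and> ip xs (replicate n 1) \<noteq> 0}"

end

theory Submission imports Defs begin

lemma card_fibers2:
  assumes "finite A" "\<And>x. x \<in> A \<Longrightarrow> card {y\<in>A. f y = f x} = 2"
  shows "card A = 2 * card (f ` A)"
proof -
  have "card A = (\<Sum>x\<in>A. 1::nat)" by simp
  also have "\<dots> = (\<Sum>y\<in>f ` A. card {x\<in>A. f x = y})"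
    using sum.image_gen[OF assms(1), of "\<lambda>_. 1::nat" f] by simp
  also have "\<dots> = (\<Sum>y\<in>f ` A. 2)"
    by (rule sum.cong) (auto simp: assms(2))
  finally show ?thesis by simp
qed

lemma two_nz:
  assumes "odd (card (UNIV :: 'a::{finite,field} set))"
  shows "(2::'a) \<noteq> 0"
proof
  assume h: "(2::'a) = 0"
  have m: "-x = x" for x :: 'a
  proof -
    have "x + x = 2 * x" by (simp add: algebra_simps)
    then have "x + x = 0" using h by simp
    then show ?thesis by (simp add: add_eq_0_iff)
  qed
  have "card (UNIV::'a set) = 2 * card ((\<lambda>x::'a. x*x + x) ` UNIV)"
  proof (rule card_fibers2)
    fix x :: 'a
    have "{y\<in>UNIV. y*y+y = x*x+x} = {x, x+1}"
    proof -
      have "y*y+y = x*x+x \<longleftrightarrow> (y-x)*(y+x+1) = 0" for y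
        by (simp add: algebra_simps)
      moreover have "(y-x)*(y+x+1) = 0 \<longleftrightarrow> y = x \<or> y = x + 1" for y
      proof -
        have "y+x+1 = 0 \<longleftrightarrow> y = -(x+1)" by (metis eq_neg_iff_add_eq_0 add.assoc)
        then have "y+x+1 = 0 \<longleftrightarrow> y = x+1" using m[of "x+1"] by (simp only:)
        then show ?thesis by auto
      qed
      ultimately show ?thesis by auto
    qed
    moreover have "x \<noteq> x + 1" by simp
    ultimately show "card {y\<in>UNIV. y*y+y = x*x+x} = 2" by simp
  qed simp
  with assms show False by simp
qed

lemma sq_fiber:
  fixes x :: "'a::field"
  assumes two: "(2::'a) \<noteq> 0" and x: "x \<noteq> 0"
  shows "{y\<in>UNIV-{0}. y*y = x*x} = {x, -x}" and "x \<noteq> -x"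
proof -
  have e: "y*y = x*x \<longleftrightarrow> y = x \<or> y = -x" for y by (rule square_eq_iff)
  have nx: "-x \<noteq> 0" using x by simp
  show "{y\<in>UNIV-{0}. y*y = x*x} = {x, -x}"
  proof (rule set_eqI)
    fix y
    have "y \<in> {y\<in>UNIV-{0}. y*y = x*x} \<longleftrightarrow> y \<noteq> 0 \<and> (y = x \<or> y = -x)" using e by simp
    also have "\<dots> \<longleftrightarrow> y = x \<or> y = -x" using x nx by metis
    finally show "y \<in> {y\<in>UNIV-{0}. y*y = x*x} \<longleftrightarrow> y \<in> {x, -x}" by simp
  qed
  show "x \<noteq> -x"
  proof
    assume h: "x = -x"
    have "x + x = x + -x" by (rule arg_cong[where f="(+) x"]) (rule h)
    then have "x + x = 0" by (simp only: right_minus)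
    then have "2 * x = 0" by (simp only: mult_2)
    with two x show False by simp
  qed
qed

lemma card_nzsq:
  assumes two: "(2::'a::{finite,field}) \<noteq> 0"
  shows "2 * card ((\<lambda>x::'a. x*x) ` (UNIV - {0})) = card (UNIV::'a set) - 1"
proof -
  have "card (UNIV - {0::'a}) = 2 * card ((\<lambda>x::'a. x*x) ` (UNIV - {0}))"
  proof (rule card_fibers2)
    fix x :: 'a assume "x \<in> UNIV - {0}"
    then have "x \<noteq> 0" by simp
    then have "{y\<in>UNIV-{0}. y*y = x*x} = {x, -x}" "x \<noteq> -x" using sq_fiber[OF two] by blast+
    then show "card {y\<in>UNIV-{0}. y*y = x*x} = 2" by simp
  qed simp
  then show ?thesis by (simp add: card_Diff_singleton)
qed

lemma nzsq_eq: "(\<lambda>x::'a::field. x*x) ` (UNIV - {0}) = {y. y \<noteq> 0 \<and> (\<exists>b. b*b = y)}"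
  by auto

lemma card_sqrt:
  assumes two: "(2::'a::{finite,field}) \<noteq> 0"
  shows "int (card {t::'a. t*t = c}) = 1 + qchar c"
proof (cases "c = 0")
  case True
  then have "{t::'a. t*t = c} = {0}" by auto
  then show ?thesis using True by (simp add: qchar_def)
next
  case False
  show ?thesis
  proof (cases "\<exists>b. b*b = c")
    case True
    then obtain b where b: "b*b = c" by blast
    then have "b \<noteq> 0" using False by auto
    have f: "{y\<in>UNIV-{0}. y*y = b*b} = {b, -b}" "b \<noteq> -b" using sq_fiber[OF two \<open>b \<noteq> 0\<close>] by blast+
    have "b*b \<noteq> 0" using b False by simp
    then have "{t::'a. t*t = b*b} = {y\<in>UNIV-{0}. y*y = b*b}" by auto
    then have "{t::'a. t*t = c} = {b, -b}" using f(1) b by simp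
    then have "card {t::'a. t*t = c} = 2" using f(2) by simp
    then show ?thesis using True False by (simp add: qchar_def)
  next
    case nf: False
    then have "{t::'a. t*t = c} = {}" by auto
    then show ?thesis using nf False by (simp add: qchar_def)
  qed
qed

lemma qchar_scale:
  fixes c v :: "'a::field"
  assumes "v \<noteq> 0"
  shows "qchar (c*(v*v)) = qchar c"
proof -
  have "(\<exists>b. b*b = c*(v*v)) \<longleftrightarrow> (\<exists>b. b*b = c)"
  proof
    assume "\<exists>b. b*b = c*(v*v)"
    then obtain b where "b*b = c*(v*v)" by blast
    then have "(b/v)*(b/v) = c" using assms by (simp add: field_simps)
    then show "\<exists>b. b*b = c" by blast
  next
    assume "\<exists>b. b*b = c"
    then obtain b where "b*b = c" by blast
    then have "(b*v)*(b*v) = c*(v*v)" by (simp add: algebra_simps)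
    then show "\<exists>b. b*b = c*(v*v)" by blast
  qed
  then show ?thesis using assms by (simp add: qchar_def)
qed

lemma sum_two_squares:
  assumes two: "(2::'a::{finite,field}) \<noteq> 0"
  shows "\<exists>u v::'a. u*u + v*v = a"
proof -
  define A where "A = range (\<lambda>u::'a. u*u)"
  define B where "B = (\<lambda>y. a - y) ` A"
  have "A = insert 0 ((\<lambda>x::'a. x*x) ` (UNIV - {0}))" unfolding A_def by auto
  moreover have "0 \<notin> (\<lambda>x::'a. x*x) ` (UNIV - {0})" by auto
  ultimately have cA: "card A = card ((\<lambda>x::'a. x*x) ` (UNIV - {0})) + 1" by simp
  have cB: "card B = card A" unfolding B_def by (rule card_image) (auto simp: inj_on_def)
  have q1: "card (UNIV::'a set) \<ge> 1" using card_gt_0_iff[of "UNIV::'a set"] by simp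
  have "card A + card B = card (UNIV::'a set) + 1" using cA cB card_nzsq[OF two] q1 by linarith
  moreover have "card (A \<union> B) \<le> card (UNIV::'a set)" by (rule card_mono) auto
  moreover have "card A + card B = card (A \<union> B) + card (A \<inter> B)" by (rule card_Un_Int) auto
  ultimately have "card (A \<inter> B) > 0" by linarith
  then have "A \<inter> B \<noteq> {}" by auto
  then obtain y where "y \<in> A" "y \<in> B" by blast
  then obtain u v where "y = u*u" "y = a - v*v" unfolding A_def B_def by blast
  then have "u*u + v*v = a" by (metis diff_add_cancel)
  then show ?thesis by blast
qed


definition Pc :: "'a::{finite,field} \<Rightarrow> nat" where
  "Pc c = card {p::'a\<times>'a. fst p * fst p + snd p * snd p = c}"

lemma Pc_le:
  fixes a b :: "'a::{finite,field}"
  assumes two: "(2::'a) \<noteq> 0" and a: "a \<noteq> 0" and b: "b \<noteq> 0"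
  shows "Pc a \<le> Pc b"
proof -
  obtain s t :: 'a where st: "s*s + t*t = b/a" using sum_two_squares[OF two] by blast
  have g: "s*s + t*t \<noteq> 0" using st a b by simp
  define f where "f = (\<lambda>p::'a\<times>'a. (fst p * s - snd p * t, fst p * t + snd p * s))"
  have "inj_on f {p. fst p * fst p + snd p * snd p = a}"
  proof (rule inj_onI)
    fix p p' assume "f p = f p'"
    obtain u v where p: "p = (u, v)" by (cases p)
    obtain u' v' where p': "p' = (u', v')" by (cases p')
    have e1: "u*s - v*t = u'*s - v'*t" and e2: "u*t + v*s = u'*t + v'*s"
      using \<open>f p = f p'\<close> unfolding f_def p p' by simp_all
    have h1: "(u-u')*s - (v-v')*t = 0"
    proof -
      have "(u-u')*s - (v-v')*t = (u*s - v*t) - (u'*s - v'*t)" by (simp add: algebra_simps)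
      then show ?thesis using e1 by simp
    qed
    have h2: "(u-u')*t + (v-v')*s = 0"
    proof -
      have "(u-u')*t + (v-v')*s = (u*t + v*s) - (u'*t + v'*s)" by (simp add: algebra_simps)
      then show ?thesis using e2 by simp
    qed
    have "(u-u')*(s*s+t*t) = s*((u-u')*s - (v-v')*t) + t*((u-u')*t + (v-v')*s)"
      by (simp add: algebra_simps)
    then have "(u-u')*(s*s+t*t) = 0" using h1 h2 by simp
    then have "u = u'" using g by simp
    have "(v-v')*(s*s+t*t) = s*((u-u')*t + (v-v')*s) - t*((u-u')*s - (v-v')*t)"
      by (simp add: algebra_simps)
    then have "(v-v')*(s*s+t*t) = 0" using h1 h2 by simp
    then have "v = v'" using g by simp
    show "p = p'" using p p' \<open>u = u'\<close> \<open>v = v'\<close> by simp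
  qed
  moreover have "f ` {p. fst p * fst p + snd p * snd p = a} \<subseteq> {p. fst p * fst p + snd p * snd p = b}"
  proof
    fix y assume "y \<in> f ` {p. fst p * fst p + snd p * snd p = a}"
    then obtain u v where uv: "u*u + v*v = a" and y: "y = f (u,v)" by auto
    have "(u*s - v*t)*(u*s - v*t) + (u*t + v*s)*(u*t + v*s) = (u*u+v*v)*(s*s+t*t)"
      by (simp add: algebra_simps)
    also have "\<dots> = b" using uv st a by simp
    finally show "y \<in> {p. fst p * fst p + snd p * snd p = b}" unfolding y f_def by simp
  qed
  ultimately show ?thesis unfolding Pc_def by (intro card_inj_on_le) auto
qed

lemma Pc_const:
  fixes a :: "'a::{finite,field}"
  assumes two: "(2::'a) \<noteq> 0" and a: "a \<noteq> 0"
  shows "Pc a = Pc (1::'a)"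
  using Pc_le[OF two a one_neq_zero] Pc_le[OF two one_neq_zero a] by simp

lemma Pc_split:
  fixes c :: "'a::{finite,field}"
  shows "Pc c = (\<Sum>u\<in>UNIV. card {v::'a. v*v = c - u*u})"
proof -
  have "{p::'a\<times>'a. fst p * fst p + snd p * snd p = c} = Sigma UNIV (\<lambda>u. {v. v*v = c - u*u})"
    by (auto simp: algebra_simps)
  then show ?thesis unfolding Pc_def by simp
qed

lemma sum_nz:
  fixes g :: "'a::{finite,field} \<Rightarrow> int"
  shows "(\<Sum>u\<in>UNIV. g u) = g 0 + (\<Sum>u\<in>UNIV-{0}. g u)"
  by (rule sum.remove) auto

lemma card_nz: "card (UNIV - {0::'a::{finite,field}}) = card (UNIV::'a set) - 1"
  by (simp add: card_Diff_singleton)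

lemma q_ge2: "card (UNIV::'a::{finite,field} set) \<ge> 2"
proof -
  have "{0::'a, 1} \<subseteq> UNIV" by simp
  then have "card {0::'a, 1} \<le> card (UNIV::'a set)" by (rule card_mono[rotated]) simp
  then show ?thesis by simp
qed

lemma Pc0:
  assumes two: "(2::'a::{finite,field}) \<noteq> 0"
  shows "int (Pc (0::'a)) = int (card (UNIV::'a set)) + (int (card (UNIV::'a set)) - 1) * qchar (-1::'a)"
proof -
  have "int (Pc (0::'a)) = (\<Sum>u\<in>UNIV. int (card {v::'a. v*v = 0 - u*u}))"
    unfolding Pc_split by simp
  also have "\<dots> = (\<Sum>u\<in>UNIV. 1 + qchar ((-1::'a)*(u*u)))"
    using card_sqrt[OF two] by simp
  also have "\<dots> = (\<Sum>u\<in>(UNIV::'a set). 1::int) + (\<Sum>u\<in>UNIV. qchar ((-1::'a)*(u*u)))"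
    by (rule sum.distrib)
  also have "(\<Sum>u\<in>UNIV. qchar ((-1::'a)*(u*u))) = qchar ((-1::'a)*(0*0)) + (\<Sum>u\<in>UNIV-{0}. qchar ((-1::'a)*(u*u)))"
    by (rule sum_nz)
  also have "(\<Sum>u\<in>UNIV-{0}. qchar ((-1::'a)*(u*u))) = (\<Sum>u\<in>UNIV-{0::'a}. qchar (-1::'a))"
    by (rule sum.cong[OF refl], rule qchar_scale, simp)
  finally show ?thesis using card_nz[where 'a='a] q_ge2[where 'a='a] by (simp add: qchar_def of_nat_diff)
qed

lemma Pc_total:
  "(\<Sum>c\<in>UNIV. int (Pc (c::'a::{finite,field}))) = int (card (UNIV::'a set)) ^ 2"
proof -
  let ?f = "\<lambda>p::'a\<times>'a. fst p * fst p + snd p * snd p"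
  have "(\<Sum>c\<in>UNIV. (\<Sum>x\<in>{x\<in>UNIV. ?f x = c}. 1::nat)) = (\<Sum>x\<in>(UNIV::('a\<times>'a) set). 1::nat)"
    by (rule sum.group) auto
  then have "(\<Sum>c\<in>UNIV. Pc (c::'a)) = card (UNIV::('a\<times>'a) set)" unfolding Pc_def by simp
  also have "card (UNIV::('a\<times>'a) set) = card (UNIV::'a set) * card (UNIV::'a set)"
    using card_cartesian_product[of "UNIV::'a set" "UNIV::'a set"] by simp
  finally have "(\<Sum>c\<in>UNIV. Pc (c::'a)) = card (UNIV::'a set) * card (UNIV::'a set)" .
  then have "int (\<Sum>c\<in>UNIV. Pc (c::'a)) = int (card (UNIV::'a set)) ^ 2" by (simp add: power2_eq_square)
  then show ?thesis by simp
qed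

lemma Pc1:
  fixes c :: "'a::{finite,field}"
  assumes two: "(2::'a) \<noteq> 0" and c: "c \<noteq> 0"
  shows "int (Pc c) = int (card (UNIV::'a set)) - qchar (-1::'a)"
proof -
  define q where "q = int (card (UNIV::'a set))"
  define e where "e = qchar (-1::'a)"
  have cq: "int (card (UNIV - {0::'a})) = q - 1"
    using card_nz[where 'a='a] q_ge2[where 'a='a] unfolding q_def by (simp add: of_nat_diff)
  have "(\<Sum>c\<in>UNIV. int (Pc (c::'a))) = int (Pc (0::'a)) + (\<Sum>c\<in>UNIV-{0::'a}. int (Pc c))"
    by (rule sum_nz)
  also have "(\<Sum>c\<in>UNIV-{0::'a}. int (Pc c)) = (\<Sum>c\<in>UNIV-{0::'a}. int (Pc (1::'a)))"
  proof (rule sum.cong[OF refl])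
    fix x :: 'a assume "x \<in> UNIV - {0}"
    then have "x \<noteq> 0" by simp
    then have "Pc x = Pc (1::'a)" by (rule Pc_const[OF two])
    then show "int (Pc x) = int (Pc (1::'a))" by (rule arg_cong)
  qed
  also have "\<dots> = int (card (UNIV - {0::'a})) * int (Pc (1::'a))"
    by simp
  finally have s1: "(\<Sum>c\<in>UNIV. int (Pc (c::'a))) = int (Pc (0::'a)) + (q - 1) * int (Pc (1::'a))"
    unfolding cq .
  have s2: "(\<Sum>c\<in>UNIV. int (Pc (c::'a))) = q ^ 2" using Pc_total[where 'a='a] unfolding q_def .
  have s3: "int (Pc (0::'a)) = q + (q - 1) * e" using Pc0[OF two] unfolding q_def e_def .
  have "(q - 1) * int (Pc (1::'a)) = q ^ 2 - q - (q - 1) * e" using s1 s2 s3 by linarith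
  also have "\<dots> = (q - 1) * (q - e)" by (simp add: algebra_simps power2_eq_square)
  finally have eq: "(q - 1) * int (Pc (1::'a)) = (q - 1) * (q - e)" .
  have "q - 1 \<noteq> 0" using q_ge2[where 'a='a] unfolding q_def by simp
  then have "int (Pc (1::'a)) = q - e" using eq by simp
  then show ?thesis using Pc_const[OF two c] unfolding q_def e_def by simp
qed

lemma ip_Cons [simp]: "ip (x#xs) (y#ys) = x*y + ip xs ys"
  unfolding ip_def by simp

lemma ip_Nil [simp]: "ip [] ys = 0"
  unfolding ip_def by simp

lemma ip_repl: "ip xs (replicate (length xs) (1::'a::comm_ring_1)) = sum_list xs"
  by (induction xs) auto

lemma fin_lists: "finite {xs::'a::finite list. length xs = n \<and> P xs}"
proof -
  have "finite {xs::'a list. set xs \<subseteq> UNIV \<and> length xs = n}" by (rule finite_lists_length_eq) simp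
  then show ?thesis by (rule rev_finite_subset) auto
qed

lemma card_lists: "card {xs::'a::finite list. length xs = n} = card (UNIV::'a set) ^ n"
  using card_lists_length_eq[of "UNIV::'a set" n] by simp

definition Sn :: "nat \<Rightarrow> 'a::{finite,field} \<Rightarrow> int" where
  "Sn n c = int (card {xs::'a list. length xs = n \<and> ip xs xs = c})"

lemma Sn_0: "Sn 0 (c::'a::{finite,field}) = (if c = 0 then 1 else 0)"
proof -
  have "{xs::'a list. length xs = 0 \<and> ip xs xs = c} = (if c = 0 then {[]} else {})" by auto
  then show ?thesis unfolding Sn_def by simp
qed

lemma Sn_Suc: "Sn (Suc n) (c::'a::{finite,field}) = (\<Sum>t\<in>UNIV. Sn n (c - t*t))"
proof -
  let ?B = "\<lambda>t. (Cons t) ` {ys::'a list. length ys = n \<and> ip ys ys = c - t*t}"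
  have eq: "{xs::'a list. length xs = Suc n \<and> ip xs xs = c} = (\<Union>t\<in>UNIV. ?B t)"
  proof (rule set_eqI)
    fix xs :: "'a list"
    show "xs \<in> {xs. length xs = Suc n \<and> ip xs xs = c} \<longleftrightarrow> xs \<in> (\<Union>t\<in>UNIV. ?B t)"
    proof
      assume "xs \<in> {xs. length xs = Suc n \<and> ip xs xs = c}"
      then obtain t ys where "xs = t # ys" "length ys = n" "t*t + ip ys ys = c"
        by (cases xs) auto
      then show "xs \<in> (\<Union>t\<in>UNIV. ?B t)" by (auto simp: algebra_simps)
    next
      assume "xs \<in> (\<Union>t\<in>UNIV. ?B t)"
      then show "xs \<in> {xs. length xs = Suc n \<and> ip xs xs = c}" by auto
    qed
  qed
  have "card (\<Union>t\<in>UNIV. ?B t) = (\<Sum>t\<in>UNIV. card (?B t))"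
    by (rule card_UN_disjoint) (auto intro: finite_imageI fin_lists)
  also have "\<dots> = (\<Sum>t\<in>UNIV. card {ys::'a list. length ys = n \<and> ip ys ys = c - t*t})"
    by (rule sum.cong) (auto intro: card_image)
  finally show ?thesis unfolding Sn_def eq by simp
qed

lemma Sn_total: "(\<Sum>c\<in>UNIV. Sn n (c::'a::{finite,field})) = int (card (UNIV::'a set)) ^ n"
proof -
  have "(\<Sum>c\<in>UNIV. (\<Sum>x\<in>{x\<in>{xs::'a list. length xs = n}. ip x x = c}. 1::nat)) = (\<Sum>x\<in>{xs::'a list. length xs = n}. 1::nat)"
    by (rule sum.group) (auto intro: fin_lists[where P="\<lambda>_. True", simplified])
  then have "(\<Sum>c\<in>UNIV. card {xs::'a list. length xs = n \<and> ip xs xs = c}) = card (UNIV::'a set) ^ n"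
    using card_lists[where 'a='a] by simp
  then have "int (\<Sum>c\<in>UNIV. card {xs::'a list. length xs = n \<and> ip xs xs = c}) = int (card (UNIV::'a set)) ^ n"
    by simp
  then show ?thesis unfolding Sn_def by simp
qed

lemma Sn1:
  assumes two: "(2::'a::{finite,field}) \<noteq> 0"
  shows "Sn 1 (c::'a) = 1 + qchar c"
proof -
  have "{xs::'a list. length xs = 1 \<and> ip xs xs = c} = (\<lambda>t. [t]) ` {t. t*t = c}"
  proof (rule set_eqI)
    fix xs :: "'a list"
    show "xs \<in> {xs. length xs = 1 \<and> ip xs xs = c} \<longleftrightarrow> xs \<in> (\<lambda>t. [t]) ` {t. t*t = c}"
      by (cases xs) auto
  qed
  moreover have "card ((\<lambda>t. [t]) ` {t::'a. t*t = c}) = card {t::'a. t*t = c}"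
    by (rule card_image) (auto simp: inj_on_def)
  ultimately show ?thesis unfolding Sn_def using card_sqrt[OF two] by simp
qed

lemma Sn1':
  assumes two: "(2::'a::{finite,field}) \<noteq> 0"
  shows "Sn (Suc 0) (c::'a) = 1 + qchar c"
  using Sn1[OF two, of c] by simp

lemma Pc_formula:
  assumes two: "(2::'a::{finite,field}) \<noteq> 0"
  shows "int (Pc (a::'a)) = (int (card (UNIV::'a set)) - qchar (-1::'a))
            + (if a = 0 then int (card (UNIV::'a set)) * qchar (-1::'a) else 0)"
proof (cases "a = 0")
  case True
  then show ?thesis using Pc0[OF two] by (simp add: algebra_simps)
next
  case False
  then show ?thesis using Pc1[OF two False] by simp
qed

lemma Sn_rec2:
  assumes two: "(2::'a::{finite,field}) \<noteq> 0"
  shows "Sn (Suc (Suc n)) (c::'a) = (int (card (UNIV::'a set)) - qchar (-1::'a)) * int (card (UNIV::'a set)) ^ n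
           + int (card (UNIV::'a set)) * qchar (-1::'a) * Sn n c"
proof -
  define q where "q = int (card (UNIV::'a set))"
  define e where "e = qchar (-1::'a)"
  let ?f = "\<lambda>p::'a\<times>'a. fst p * fst p + snd p * snd p"
  have "Sn (Suc (Suc n)) c = (\<Sum>u\<in>UNIV. \<Sum>v\<in>UNIV. Sn n (c - u*u - v*v))"
    unfolding Sn_Suc by (simp add: algebra_simps)
  also have "\<dots> = (\<Sum>p\<in>UNIV \<times> UNIV. Sn n (c - ?f p))"
    by (subst sum.cartesian_product) (simp add: case_prod_beta algebra_simps)
  also have "\<dots> = (\<Sum>a\<in>UNIV. \<Sum>p\<in>{p\<in>UNIV \<times> UNIV. ?f p = a}. Sn n (c - ?f p))"
    by (rule sum.group[symmetric]) auto
  also have "\<dots> = (\<Sum>a\<in>UNIV. int (Pc a) * Sn n (c - a))"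
  proof (rule sum.cong)
    fix a :: 'a
    have "(\<Sum>p\<in>{p\<in>UNIV \<times> UNIV. ?f p = a}. Sn n (c - ?f p)) = (\<Sum>p\<in>{p\<in>UNIV \<times> UNIV. ?f p = a}. Sn n (c - a))"
      by (rule sum.cong) auto
    also have "\<dots> = int (card {p\<in>UNIV \<times> UNIV. ?f p = a}) * Sn n (c - a)" by simp
    also have "{p\<in>UNIV \<times> UNIV. ?f p = a} = {p. ?f p = a}" by auto
    finally show "(\<Sum>p\<in>{p\<in>UNIV \<times> UNIV. ?f p = a}. Sn n (c - ?f p)) = int (Pc a) * Sn n (c - a)"
      unfolding Pc_def by simp
  qed simp
  also have "\<dots> = (\<Sum>a\<in>UNIV. (q - e) * Sn n (c - a) + (if a = 0 then q * e * Sn n c else 0))"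
    by (rule sum.cong) (auto simp: Pc_formula[OF two] q_def e_def algebra_simps)
  also have "\<dots> = (q - e) * (\<Sum>a\<in>UNIV. Sn n (c - a)) + q * e * Sn n c"
    by (simp add: sum.distrib sum_distrib_left)
  also have "(\<Sum>a\<in>UNIV. Sn n (c - a)) = (\<Sum>a\<in>UNIV. Sn n (a::'a))"
    by (rule sum.reindex_bij_witness[where i="\<lambda>a. c - a" and j="\<lambda>a. c - a"]) auto
  also have "\<dots> = q ^ n" unfolding q_def by (rule Sn_total)
  finally show ?thesis unfolding q_def e_def .
qed

definition Dn :: "nat \<Rightarrow> 'a::{finite,field} \<Rightarrow> int" where
  "Dn n (c::'a) = Sn n (0::'a) - Sn n c"

lemma Dn_rec2:
  assumes two: "(2::'a::{finite,field}) \<noteq> 0"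
  shows "Dn (Suc (Suc n)) (c::'a) = int (card (UNIV::'a set)) * qchar (-1::'a) * Dn n c"
  unfolding Dn_def Sn_rec2[OF two] by (simp add: algebra_simps)

lemma Dn_even:
  assumes two: "(2::'a::{finite,field}) \<noteq> 0" and c: "(c::'a) \<noteq> 0"
  shows "Dn (2*k) c = (int (card (UNIV::'a set)) * qchar (-1::'a)) ^ k"
proof (induction k)
  case 0
  then show ?case using c unfolding Dn_def by (simp add: Sn_0)
next
  case (Suc k)
  have "2 * Suc k = Suc (Suc (2*k))" by simp
  then show ?case using Suc Dn_rec2[OF two, of "2*k" c] by simp
qed

lemma Dn_odd:
  assumes two: "(2::'a::{finite,field}) \<noteq> 0" and c: "(c::'a) \<noteq> 0"
  shows "Dn (2*k+1) c = - ((int (card (UNIV::'a set)) * qchar (-1::'a)) ^ k * qchar c)"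
proof (induction k)
  case 0
  then show ?case using c Sn1'[OF two, of c] Sn1'[OF two, of 0] unfolding Dn_def by (simp add: qchar_def)
next
  case (Suc k)
  have "2 * Suc k + 1 = Suc (Suc (2*k+1))" by simp
  then show ?case using Suc Dn_rec2[OF two, of "2*k+1" c] by simp
qed

lemma qchar_neg:
  assumes two: "(2::'a::{finite,field}) \<noteq> 0"
  shows "qchar (-(a::'a)) = qchar (-1::'a) * qchar a"
proof (cases "a = 0")
  case True
  then show ?thesis by (simp add: qchar_def)
next
  case a0: False
  show ?thesis
  proof (cases "\<exists>i::'a. i*i = -1")
    case True
    then obtain i :: 'a where i: "i*i = -1" by blast
    have "(\<exists>b. b*b = -a) \<longleftrightarrow> (\<exists>b. b*b = a)"
    proof
      assume "\<exists>b. b*b = -a"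
      then obtain b where "b*b = -a" by blast
      then have "(i*b)*(i*b) = a" using i by (simp add: algebra_simps)
      then show "\<exists>b. b*b = a" by blast
    next
      assume "\<exists>b. b*b = a"
      then obtain b where "b*b = a" by blast
      then have "(i*b)*(i*b) = -a" using i by (simp add: algebra_simps)
      then show "\<exists>b. b*b = -a" by blast
    qed
    then show ?thesis using True a0 by (simp add: qchar_def)
  next
    case nsq: False
    have m1: "qchar (-1::'a) = -1" using nsq by (simp add: qchar_def)
    define NS where "NS = {y::'a. y \<noteq> 0 \<and> (\<exists>b. b*b = y)}"
    define N where "N = {y::'a. y \<noteq> 0 \<and> \<not> (\<exists>b. b*b = y)}"
    have sq_neg: "\<not> (\<exists>b. b*b = -y)" if "y \<in> NS" for y
    proof
      assume "\<exists>b. b*b = -y"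
      then obtain b where b: "b*b = -y" by blast
      from that obtain c where c: "c*c = y" "y \<noteq> 0" unfolding NS_def by blast
      then have "c \<noteq> 0" by auto
      have "(b/c)*(b/c) = -1" using b c \<open>c \<noteq> 0\<close> by (simp add: field_simps)
      then show False using nsq by blast
    qed
    have sub: "uminus ` NS \<subseteq> N"
    proof
      fix z assume "z \<in> uminus ` NS"
      then obtain y where y: "y \<in> NS" "z = -y" by blast
      then have "y \<noteq> 0" unfolding NS_def by simp
      then show "z \<in> N" using sq_neg[OF y(1)] y(2) unfolding N_def by simp
    qed
    have cNS: "2 * card NS = card (UNIV::'a set) - 1"
      using card_nzsq[OF two] nzsq_eq[where 'a='a] unfolding NS_def by simp
    have Neq: "N = (UNIV - {0}) - NS" unfolding N_def NS_def by auto
    have NSsub: "NS \<subseteq> UNIV - {0}" unfolding NS_def by auto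
    have cN1: "card N = card (UNIV - {0::'a}) - card NS"
      unfolding Neq by (rule card_Diff_subset) (simp_all add: NSsub)
    have cN2: "card (UNIV - {0::'a}) = 2 * card NS" using cNS card_nz[where 'a='a] by simp
    have cN: "card N = card NS" using cN1 cN2 by simp
    have "card (uminus ` NS) = card NS" by (rule card_image) (simp add: inj_on_def)
    then have eqN: "uminus ` NS = N" using sub cN by (intro card_subset_eq) auto
    show ?thesis
    proof (cases "\<exists>b. b*b = a")
      case True
      then have "a \<in> NS" using a0 unfolding NS_def by simp
      then have "\<not> (\<exists>b. b*b = -a)" by (rule sq_neg)
      then show ?thesis using True a0 m1 by (simp add: qchar_def)
    next
      case False
      then have "a \<in> N" using a0 unfolding N_def by simp
      then obtain s where "s \<in> NS" "a = -s" using eqN by blast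
      then have "\<exists>b. b*b = -a" unfolding NS_def by simp
      then show ?thesis using False a0 m1 by (simp add: qchar_def)
    qed
  qed
qed

lemma qchar_pow_neg:
  assumes two: "(2::'a::{finite,field}) \<noteq> 0"
  shows "qchar ((-1)^k * (a::'a)) = qchar (-1::'a) ^ k * qchar a"
proof (induction k)
  case 0
  then show ?case by simp
next
  case (Suc k)
  have "(-1::'a)^(Suc k) * a = - ((-1)^k * a)" by simp
  then show ?case using Suc qchar_neg[OF two, of "(-1)^k * a"] by simp
qed

lemma ip_scale: "ip (map ((*) l) xs) (map ((*) l) xs) = l*l*ip xs (xs::'a::comm_ring list)"
  by (induction xs) (auto simp: algebra_simps)

lemma ip_shift: "ip (map (\<lambda>t. t + c) xs) (map (\<lambda>t. t + c) xs)
   = ip xs xs + 2*c*sum_list xs + of_nat (length xs) * c * (c::'a::comm_ring_1)"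
  by (induction xs) (auto simp: algebra_simps)

lemma sum_shift: "sum_list (map (\<lambda>t. t + c) xs) = sum_list xs + of_nat (length xs) * (c::'a::comm_ring_1)"
  by (induction xs) (auto simp: algebra_simps)

lemma ip_shift': "ip (map (\<lambda>t. t - c) xs) (map (\<lambda>t. t - c) xs)
   = ip xs xs - 2*c*sum_list xs + of_nat (length xs) * c * (c::'a::comm_ring_1)"
  by (induction xs) (auto simp: algebra_simps)

lemma sum_shift': "sum_list (map (\<lambda>t. t - c) xs) = sum_list xs - of_nat (length xs) * (c::'a::comm_ring_1)"
  by (induction xs) (auto simp: algebra_simps)

definition En :: "nat \<Rightarrow> 'a::{finite,field} \<Rightarrow> 'a list set" where
  "En n r = {xs. length xs = n \<and> sum_list xs \<noteq> 0 \<and> ip xs xs = r * sum_list xs}"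

lemma En_le:
  fixes r s :: "'a::{finite,field}"
  assumes r: "r \<noteq> 0" and s: "s \<noteq> 0"
  shows "card (En n r) \<le> card (En n s)"
proof -
  define l where "l = s / r"
  have l: "l \<noteq> 0" using r s unfolding l_def by simp
  have "inj_on (map ((*) l)) (En n r)"
    by (rule inj_onI) (simp add: inj_map_eq_map l)
  moreover have "map ((*) l) ` En n r \<subseteq> En n s"
  proof
    fix ys assume "ys \<in> map ((*) l) ` En n r"
    then obtain xs where xs: "xs \<in> En n r" "ys = map ((*) l) xs" by blast
    have "l*l*(r * sum_list xs) = s * (l * sum_list xs)" using r unfolding l_def by (simp add: field_simps)
    then show "ys \<in> En n s" using xs l unfolding En_def by (simp add: ip_scale sum_list_const_mult)
  qed
  ultimately show ?thesis by (intro card_inj_on_le) (auto simp: En_def intro: fin_lists)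
qed

lemma En_const:
  fixes r :: "'a::{finite,field}"
  assumes two: "(2::'a) \<noteq> 0" and r: "r \<noteq> 0"
  shows "card (En n r) = card (En n (2::'a))"
  by (rule le_antisym[OF En_le[OF r two] En_le[OF two r]])

lemma LNZ_part:
  assumes two: "(2::'a::{finite,field}) \<noteq> 0"
  shows "int (card {xs::'a list. length xs = n \<and> sum_list xs \<noteq> 0})
    = int (card (En n (0::'a))) + (int (card (UNIV::'a set)) - 1) * int (card (En n (2::'a)))"
proof -
  let ?S = "{xs::'a list. length xs = n \<and> sum_list xs \<noteq> 0}"
  have "(\<Sum>r\<in>UNIV. (\<Sum>x\<in>{x\<in>?S. ip x x / sum_list x = r}. 1::nat)) = (\<Sum>x\<in>?S. 1::nat)"
    by (rule sum.group) (auto intro: fin_lists)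
  moreover have "{x\<in>?S. ip x x / sum_list x = r} = En n r" for r
    unfolding En_def by (auto simp: field_simps)
  ultimately have "(\<Sum>r\<in>UNIV. card (En n (r::'a))) = card ?S" by simp
  then have "card ?S = card (En n (0::'a)) + (\<Sum>r\<in>UNIV-{0::'a}. card (En n r))"
    by (simp add: sum.remove[of UNIV 0])
  also have "(\<Sum>r\<in>UNIV-{0::'a}. card (En n r)) = (\<Sum>r\<in>UNIV-{0::'a}. card (En n (2::'a)))"
    by (rule sum.cong) (auto simp: En_const[OF two])
  also have "\<dots> = (card (UNIV::'a set) - 1) * card (En n (2::'a))" using card_nz[where 'a='a] by simp
  finally show ?thesis using q_ge2[where 'a='a] by (simp add: of_nat_diff)
qed

lemma LNZ_card:
  "int (card {xs::'a::{finite,field} list. length xs = Suc m \<and> sum_list xs \<noteq> 0})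
    = int (card (UNIV::'a set)) ^ Suc m - int (card (UNIV::'a set)) ^ m"
proof -
  let ?A = "{xs::'a list. length xs = Suc m}"
  let ?Z = "{xs::'a list. length xs = Suc m \<and> sum_list xs = 0}"
  have "?Z = (\<lambda>ys. (- sum_list ys) # ys) ` {ys. length ys = m}"
  proof (rule set_eqI)
    fix xs :: "'a list"
    show "xs \<in> ?Z \<longleftrightarrow> xs \<in> (\<lambda>ys. (- sum_list ys) # ys) ` {ys. length ys = m}"
    proof
      assume "xs \<in> ?Z"
      then obtain x ys where xy: "xs = x # ys" "length ys = m" "x + sum_list ys = 0" by (cases xs) auto
      then have "x = - sum_list ys" by (simp add: add_eq_0_iff2)
      then have "xs = (- sum_list ys) # ys" using xy(1) by simp
      then show "xs \<in> (\<lambda>ys. (- sum_list ys) # ys) ` {ys. length ys = m}"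
        using xy(2) by blast
    qed auto
  qed
  moreover have "inj_on (\<lambda>ys::'a list. (- sum_list ys) # ys) {ys. length ys = m}"
    by (auto simp: inj_on_def)
  ultimately have cZ: "card ?Z = card (UNIV::'a set) ^ m" using card_lists[where 'a='a] by (simp add: card_image)
  have eqd: "{xs::'a list. length xs = Suc m \<and> sum_list xs \<noteq> 0} = ?A - ?Z" by auto
  have "card (?A - ?Z) = card ?A - card ?Z"
    by (rule card_Diff_subset) (auto intro: fin_lists)
  then have "card {xs::'a list. length xs = Suc m \<and> sum_list xs \<noteq> 0} = card ?A - card ?Z"
    unfolding eqd .
  moreover have "card ?Z \<le> card ?A" by (rule card_mono) (auto intro: fin_lists[where P="\<lambda>_. True", simplified])
  ultimately show ?thesis using cZ card_lists[where 'a='a] by (simp add: of_nat_diff)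
qed

lemma key:
  assumes two: "(2::'a::{finite,field}) \<noteq> 0" and n: "n = Suc m"
  shows "int (card (UNIV::'a set)) * int (card (En n (0::'a)))
     = int (card (UNIV::'a set)) ^ n - int (card (UNIV::'a set)) ^ m + (int (card (UNIV::'a set)) - 1) * Dn n (of_nat n :: 'a)"
proof -
  define q where "q = int (card (UNIV::'a set))"
  define Z where "Z = {xs::'a list. length xs = n \<and> ip xs xs = 0 \<and> sum_list xs = 0}"
  have fZ: "finite Z" unfolding Z_def by (rule fin_lists)
  have fE: "finite (En n r)" for r :: 'a unfolding En_def by (rule fin_lists)
  have s0: "Sn n (0::'a) = int (card Z) + int (card (En n (0::'a)))"
  proof -
    have "{xs::'a list. length xs = n \<and> ip xs xs = 0} = Z \<union> En n 0" unfolding Z_def En_def by auto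
    moreover have "Z \<inter> En n 0 = {}" unfolding Z_def En_def by auto
    ultimately show ?thesis unfolding Sn_def using fZ fE by (simp add: card_Un_disjoint)
  qed
  have sn: "Sn n (of_nat n :: 'a) = int (card Z) + int (card (En n (2::'a)))"
  proof -
    let ?T = "{xs::'a list. length xs = n \<and> ip xs xs = 2 * sum_list xs}"
    have "bij_betw (map (\<lambda>t. t + 1)) {xs::'a list. length xs = n \<and> ip xs xs = of_nat n} ?T"
    proof (rule bij_betw_byWitness[where f'="map (\<lambda>t. t + (-1))"])
      show "\<forall>a\<in>{xs::'a list. length xs = n \<and> ip xs xs = of_nat n}. map (\<lambda>t. t + (-1)) (map (\<lambda>t. t + 1) a) = a"
        by (simp add: map_idI)
      show "\<forall>a\<in>?T. map (\<lambda>t. t + 1) (map (\<lambda>t. t + (-1)) a) = a"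
        by (simp add: map_idI)
      show "map (\<lambda>t. t + 1) ` {xs::'a list. length xs = n \<and> ip xs xs = of_nat n} \<subseteq> ?T"
        by (auto simp: ip_shift sum_shift ip_shift' sum_shift' algebra_simps)
      show "map (\<lambda>t. t + (-1)) ` ?T \<subseteq> {xs::'a list. length xs = n \<and> ip xs xs = of_nat n}"
        by (auto simp: ip_shift sum_shift ip_shift' sum_shift' algebra_simps)
    qed
    then have "card {xs::'a list. length xs = n \<and> ip xs xs = of_nat n} = card ?T" by (rule bij_betw_same_card)
    moreover have "?T = Z \<union> En n 2" unfolding Z_def En_def by auto
    moreover have "Z \<inter> En n 2 = {}" unfolding Z_def En_def by auto
    ultimately show ?thesis unfolding Sn_def using fZ fE by (simp add: card_Un_disjoint)
  qed
  have "int (card {xs::'a list. length xs = n \<and> sum_list xs \<noteq> 0}) = q ^ n - q ^ m"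
    unfolding n q_def by (rule LNZ_card)
  then have "int (card (En n (0::'a))) + (q - 1) * int (card (En n (2::'a))) = q ^ n - q ^ m"
    using LNZ_part[OF two, of n] unfolding q_def by simp
  then show ?thesis using s0 sn unfolding Dn_def q_def[symmetric] by (simp add: algebra_simps)
qed

lemma ip_repl': "length xs = n \<Longrightarrow> ip xs (replicate n (1::'a::comm_ring_1)) = sum_list xs"
  using ip_repl by blast

lemma K_En:
  fixes F :: "'a::{finite,field} itself"
  shows "K n F = card (En n (0::'a))"
proof -
  have "{xs :: 'a list. length xs = n \<and> ip xs xs = 0 \<and> ip xs (replicate n 1) \<noteq> 0} = En n 0"
    unfolding En_def by (auto simp: ip_repl')
  then show ?thesis unfolding K_def by simp
qed

theorem mainTheorem8:
  fixes n :: nat and F :: "'a::{finite,field} itself"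
  defines "q \<equiv> int (card (UNIV :: 'a set))"
  assumes "odd (card (UNIV :: 'a set))" and "n \<ge> 2"
  shows "int (K n F) =
    (if CHAR('a) dvd n then q ^ (n - 2) * (q - 1)
     else if odd n then q ^ (n - 2) * (q - 1)
        - qchar ((-1) ^ ((n - 1) div 2) * (of_nat n :: 'a)) * (q - 1) * q ^ ((n - 3) div 2)
     else q ^ (n - 2) * (q - 1)
        + qchar ((-1) ^ (n div 2) :: 'a) * (q - 1) * q ^ ((n - 2) div 2))"
proof -
  have two: "(2::'a) \<noteq> 0" using two_nz assms(2) by blast
  define e where "e = qchar (-1::'a)"
  have q0: "q \<noteq> 0" using q_ge2[where 'a='a] unfolding q_def by simp
  obtain m where nm: "n = Suc m" using assms(3) by (cases n) auto
  have kk: "q * int (K n F) = q ^ n - q ^ m + (q - 1) * Dn n (of_nat n :: 'a)"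
    using key[OF two nm] unfolding K_En q_def .
  show ?thesis
  proof (cases "CHAR('a) dvd n")
    case True
    then have "(of_nat n :: 'a) = 0" by (simp add: of_nat_eq_0_iff_char_dvd)
    then have "Dn n (of_nat n :: 'a) = 0" unfolding Dn_def by simp
    then have "q * int (K n F) = q * (q ^ (n - 2) * (q - 1))"
      using kk assms(3) nm by (cases m) (auto simp: algebra_simps)
    then show ?thesis using True q0 by simp
  next
    case False
    then have c: "(of_nat n :: 'a) \<noteq> 0" by (simp add: of_nat_eq_0_iff_char_dvd)
    show ?thesis
    proof (cases "odd n")
      case True
      then obtain k where k: "n = 2*k+1" by (metis oddE)
      then obtain j where j: "k = Suc j" using assms(3) by (cases k) auto
      have D: "Dn n (of_nat n :: 'a) = - ((q * e) ^ k * qchar (of_nat n :: 'a))"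
        unfolding k q_def e_def by (rule Dn_odd[OF two c[unfolded k]])
      have ch: "qchar ((-1) ^ ((n - 1) div 2) * (of_nat n :: 'a)) = e ^ k * qchar (of_nat n :: 'a)"
        using qchar_pow_neg[OF two] k unfolding e_def by simp
      define X where "X = qchar (of_nat n :: 'a)"
      define R where "R = q ^ (2*j+1)"
      define Q where "Q = q ^ j"
      have n3: "n = 2*j+3" using k j by simp
      have m2: "m = 2*j+2" using nm n3 by simp
      have p1: "q ^ n = R*q*q" unfolding n3 R_def by (simp add: power_add power2_eq_square power3_eq_cube algebra_simps)
      have p2: "q ^ m = R*q" unfolding m2 R_def by (simp add: power_add power2_eq_square algebra_simps)
      have p3: "(q * e) ^ k = q * e * Q * e ^ j" unfolding j Q_def by (simp add: power_mult_distrib)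
      have p4: "q ^ (n - 2) = R" unfolding n3 R_def by simp
      have p5: "(n - 3) div 2 = j" unfolding n3 by simp
      have p6: "(n - 1) div 2 = k" unfolding n3 j by simp
      have "q * int (K n F) = R*q*q - R*q + (q - 1) * (- (q * e * Q * e ^ j * X))"
        using kk unfolding D p1 p2 p3 X_def .
      also have "\<dots> = q * (R * (q - 1) - e ^ k * X * (q - 1) * Q)"
        unfolding j by (simp add: algebra_simps)
      finally have "q * int (K n F) = q * (q ^ (n - 2) * (q - 1)
        - qchar ((-1) ^ ((n - 1) div 2) * (of_nat n :: 'a)) * (q - 1) * q ^ ((n - 3) div 2))"
        unfolding ch p4 p5 X_def Q_def by simp
      then show ?thesis using True False q0 by simp
    next
      case ev: False
      then obtain k where k: "n = 2*k" by (metis evenE)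
      then obtain j where j: "k = Suc j" using assms(3) by (cases k) auto
      have D: "Dn n (of_nat n :: 'a) = (q * e) ^ k"
        unfolding k q_def e_def by (rule Dn_even[OF two c[unfolded k]])
      have ch: "qchar ((-1) ^ (n div 2) :: 'a) = e ^ k"
      proof -
        have "\<exists>b::'a. b*b = 1" by (rule exI[of _ 1]) simp
        then have q1: "qchar (1::'a) = 1" by (simp add: qchar_def)
        show ?thesis using qchar_pow_neg[OF two, of k 1] k q1 unfolding e_def by simp
      qed
      define R where "R = q ^ (2*j)"
      define Q where "Q = q ^ j"
      have n3: "n = 2*j+2" using k j by simp
      have m2: "m = 2*j+1" using nm n3 by simp
      have p1: "q ^ n = R*q*q" unfolding n3 R_def by (simp add: power_add power2_eq_square algebra_simps)
      have p2: "q ^ m = R*q" unfolding m2 R_def by (simp add: algebra_simps)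
      have p3: "(q * e) ^ k = q * e * Q * e ^ j" unfolding j Q_def by (simp add: power_mult_distrib)
      have p4: "q ^ (n - 2) = R" unfolding n3 R_def by simp
      have p5: "(n - 2) div 2 = j" unfolding n3 by simp
      have "q * int (K n F) = R*q*q - R*q + (q - 1) * (q * e * Q * e ^ j)"
        using kk unfolding D p1 p2 p3 .
      also have "\<dots> = q * (R * (q - 1) + e ^ k * (q - 1) * Q)"
        unfolding j by (simp add: algebra_simps)
      finally have "q * int (K n F) = q * (q ^ (n - 2) * (q - 1)
        + qchar ((-1) ^ (n div 2) :: 'a) * (q - 1) * q ^ ((n - 2) div 2))"
        unfolding ch p4 p5 Q_def by simp
      then show ?thesis using ev False q0 by simp
    qed
  qed
qed

end
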